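(* Let $0 < \varepsilon \leq 1/2$ and $d \geq 1$. Then for every positive integer $N \leq 2^{(1-H(\varepsilon))d}$ there exists an $\varepsilon$-sparse set $S \subseteq I_3^d$ with $|S| = N$.
   Context: $H(x) = -x\log_2 x - (1-x)\log_2(1-x)$ is the binary entropy function. $I_3^d = \{1,2,3\}^d$. For $\alpha,\beta \in I_3^d$, $\rho(\alpha,\beta)$ is the Hamming distance (number of coordinates where they differ). For $\alpha \in I_3^d$ let $T_\alpha = \{\beta \in I_3^d : \rho(\alpha,\beta) = d\}$. For $0<\varepsilon<1$, a set $S \subseteq I_3^d$ is $\varepsilon$-sparse if (1) $\rho(\alpha,\beta) \geq \varepsilon d$ for all distinct $\alpha,\beta \in S$, and (2) for every $\alpha \in S$ there is $\gamma_\alpha \in I_3^d$ with $T_{\gamma_\alpha} \cap S = \{\alpha\}$. *)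

theory Defs
  imports "HOL-Analysis.Analysis" "HOL-Library.FuncSet"
begin

definition binent :: "real \<Rightarrow> real" where
  "binent x = - x * log 2 x - (1 - x) * log 2 (1 - x)"

definition I3 :: "nat \<Rightarrow> (nat \<Rightarrow> nat) set" where
  "I3 d = {0..<d} \<rightarrow>\<^sub>E {1,2,3}"

definition hamming :: "nat \<Rightarrow> (nat \<Rightarrow> nat) \<Rightarrow> (nat \<Rightarrow> nat) \<Rightarrow> nat" where
  "hamming d a b = card {i \<in> {0..<d}. a i \<noteq> b i}"

definition Tset :: "nat \<Rightarrow> (nat \<Rightarrow> nat) \<Rightarrow> (nat \<Rightarrow> nat) set" where
  "Tset d a = {b \<in> I3 d. hamming d a b = d}"

definition eps_sparse :: "real \<Rightarrow> nat \<Rightarrow> (nat \<Rightarrow> nat) set \<Rightarrow> bool" where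
  "eps_sparse \<epsilon> d S \<longleftrightarrow> S \<subseteq> I3 d \<and>
     (\<forall>a\<in>S. \<forall>b\<in>S. a \<noteq> b \<longrightarrow> real (hamming d a b) \<ge> \<epsilon> * real d) \<and>
     (\<forall>a\<in>S. \<exists>g\<in>I3 d. Tset d g \<inter> S = {a})"

end

theory Submission
  imports Defs
begin

lemma weight_lb:
  fixes e :: real and d k :: nat
  assumes e: "0 < e" "e \<le> 1/2" and k: "real k \<le> e * real d"
  shows "2 powr (- binent e * real d) \<le> e ^ k * (1 - e) ^ (d - k)"
proof -
  have "e * real d \<le> 1 * real d" using e by (intro mult_right_mono) auto
  then have "real k \<le> real d" using k by linarith
  then have kd: "k \<le> d" by simp
  have e1: "0 < 1 - e" using e by auto
  have lne: "ln e \<le> ln (1 - e)" using e by simp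
  have "ln (e ^ k * (1 - e) ^ (d - k)) = real k * ln e + real (d - k) * ln (1 - e)"
    using e e1 by (simp add: ln_mult ln_realpow)
  also have "\<dots> = real d * ln (1 - e) + real k * (ln e - ln (1 - e))"
    using kd by (simp add: of_nat_diff algebra_simps)
  also have "\<dots> \<ge> real d * ln (1 - e) + (e * real d) * (ln e - ln (1 - e))"
    using k lne by (intro add_left_mono mult_right_mono_neg) auto
  finally have L: "real d * ln (1 - e) + (e * real d) * (ln e - ln (1 - e)) \<le> ln (e ^ k * (1 - e) ^ (d - k))" .
  have "ln (2 powr (- binent e * real d)) = - binent e * real d * ln 2" by (simp add: ln_powr)
  also have "\<dots> = real d * ln (1 - e) + (e * real d) * (ln e - ln (1 - e))"
    unfolding binent_def log_def by (simp add: field_simps)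
  finally have "ln (2 powr (- binent e * real d)) \<le> ln (e ^ k * (1 - e) ^ (d - k))" using L by simp
  moreover have pos: "0 < e ^ k * (1 - e) ^ (d - k)" using e e1 by simp
  moreover have "0 < 2 powr (- binent e * real d)" by simp
  ultimately show ?thesis using ln_le_cancel_iff by blast
qed

lemma vol_bound:
  fixes e :: real and d :: nat
  assumes e: "0 < e" "e \<le> 1/2"
  shows "real (card {A. A \<subseteq> {0..<d} \<and> real (card A) < e * real d}) \<le> 2 powr (binent e * real d)"
proof -
  let ?P = "{A. A \<subseteq> {0..<d} \<and> real (card A) < e * real d}"
  let ?w = "\<lambda>A. e ^ card A * (1 - e) ^ (d - card A)"
  have sub: "?P \<subseteq> Pow {0..<d}" by auto
  have fin: "finite ?P" by (rule finite_subset[OF sub]) auto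
  have "(\<Prod>x\<in>{0..<d}. e + (1 - e)) = (\<Sum>X\<in>Pow {0..<d}. (\<Prod>x\<in>X. e) * (\<Prod>x\<in>{0..<d}-X. (1-e)))"
    by (rule prod_add) auto
  also have "\<dots> = (\<Sum>X\<in>Pow {0..<d}. ?w X)"
    by (intro sum.cong refl) (auto simp: card_Diff_subset finite_subset)
  finally have one: "(\<Sum>X\<in>Pow {0..<d}. ?w X) = 1" by simp
  have "real (card ?P) * 2 powr (- binent e * real d) = (\<Sum>A\<in>?P. 2 powr (- binent e * real d))"
    by simp
  also have "\<dots> \<le> (\<Sum>A\<in>?P. ?w A)"
    by (intro sum_mono weight_lb e) auto
  also have "\<dots> \<le> (\<Sum>X\<in>Pow {0..<d}. ?w X)"
    by (intro sum_mono2 sub) (use e in auto)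
  finally have f1: "real (card ?P) * 2 powr (- binent e * real d) \<le> 1" using one by simp
  have pos: "0 \<le> 2 powr (binent e * real d)" by simp
  have f2: "real (card ?P) * 2 powr (- binent e * real d) * 2 powr (binent e * real d) \<le> 1 * 2 powr (binent e * real d)"
    by (rule mult_right_mono[OF f1 pos])
  have eq: "2 powr (- binent e * real d) * 2 powr (binent e * real d) = 1"
    by (subst powr_add[symmetric]) simp
  have "real (card ?P) * 2 powr (- binent e * real d) * 2 powr (binent e * real d) = real (card ?P)"
    by (simp only: mult.assoc eq mult_1_right)
  then show ?thesis using f2 by linarith
qed
definition B2 :: "nat \<Rightarrow> (nat \<Rightarrow> nat) set" where
  "B2 d = {0..<d} \<rightarrow>\<^sub>E {1,2}"

lemma B2_I3: "B2 d \<subseteq> I3 d"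
  unfolding B2_def I3_def by (auto simp: PiE_def Pi_def)

lemma card_B2: "card (B2 d) = 2 ^ d"
  unfolding B2_def by (simp add: card_PiE numeral_2_eq_2)

lemma hamming_sym: "hamming d a b = hamming d b a"
  unfolding hamming_def by (subst eq_commute) (rule refl)

lemma ball_card:
  assumes c: "c \<in> B2 d"
  shows "card {b \<in> B2 d. real (hamming d c b) < e * real d}
         \<le> card {A. A \<subseteq> {0..<d} \<and> real (card A) < e * real d}"
proof -
  let ?f = "\<lambda>b. {i \<in> {0..<d}. c i \<noteq> b i}"
  have "inj_on ?f {b \<in> B2 d. real (hamming d c b) < e * real d}"
  proof (rule inj_onI)
    fix x y assume x: "x \<in> {b \<in> B2 d. real (hamming d c b) < e * real d}"
      and y: "y \<in> {b \<in> B2 d. real (hamming d c b) < e * real d}" and eq: "?f x = ?f y"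
    show "x = y"
    proof
      fix i
      show "x i = y i"
      proof (cases "i < d")
        case True
        have "i \<in> ?f x \<longleftrightarrow> i \<in> ?f y" by (simp only: eq)
        then have "(c i \<noteq> x i) = (c i \<noteq> y i)" using True by simp
        moreover have "x i \<in> {1,2}" "y i \<in> {1,2}" "c i \<in> {1,2}" using x y c True
          unfolding B2_def by auto
        ultimately show ?thesis by auto
      next
        case False
        then show ?thesis using x y unfolding B2_def by (auto simp: PiE_def extensional_def)
      qed
    qed
  qed
  moreover have "?f ` {b \<in> B2 d. real (hamming d c b) < e * real d}
      \<subseteq> {A. A \<subseteq> {0..<d} \<and> real (card A) < e * real d}"
    unfolding hamming_def by auto
  moreover have "finite {A. A \<subseteq> {0..<d} \<and> real (card A) < e * real d}"
    by (rule finite_subset[of _ "Pow {0..<d}"]) auto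
  ultimately show ?thesis by (rule card_inj_on_le)
qed

lemma greedy:
  fixes e :: real and d N :: nat
  assumes ed: "0 < e * real d"
    and NV: "real N * real (card {A. A \<subseteq> {0..<d} \<and> real (card A) < e * real d}) \<le> 2 ^ d"
  shows "n \<le> N \<Longrightarrow> \<exists>C \<subseteq> B2 d. card C = n \<and> (\<forall>a\<in>C. \<forall>b\<in>C. a \<noteq> b \<longrightarrow> e * real d \<le> real (hamming d a b))"
proof (induction n)
  case 0
  show ?case by (rule exI[of _ "{}"]) simp
next
  case (Suc n)
  let ?V = "card {A. A \<subseteq> {0..<d} \<and> real (card A) < e * real d}"
  let ?ball = "\<lambda>c. {b \<in> B2 d. real (hamming d c b) < e * real d}"
  obtain C where C: "C \<subseteq> B2 d" "card C = n"
    "\<forall>a\<in>C. \<forall>b\<in>C. a \<noteq> b \<longrightarrow> e * real d \<le> real (hamming d a b)"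
    using Suc.IH Suc.prems by (meson Suc_leD)
  have finB: "finite (B2 d)" unfolding B2_def by (auto intro: finite_PiE)
  have finC: "finite C" using C(1) finB finite_subset by blast
  have V1: "1 \<le> ?V"
  proof -
    have "{} \<in> {A. A \<subseteq> {0..<d} \<and> real (card A) < e * real d}" using ed by auto
    moreover have "finite {A. A \<subseteq> {0..<d} \<and> real (card A) < e * real d}"
      by (rule finite_subset[of _ "Pow {0..<d}"]) auto
    ultimately show ?thesis by (metis One_nat_def Suc_leI card_gt_0_iff empty_iff)
  qed
  have "card (\<Union>c\<in>C. ?ball c) \<le> (\<Sum>c\<in>C. card (?ball c))"
    by (rule card_UN_le[OF finC])
  also have "\<dots> \<le> (\<Sum>c\<in>C. ?V)"
    by (intro sum_mono ball_card) (use C(1) in auto)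
  also have "\<dots> = n * ?V" using C(2) by simp
  finally have U: "card (\<Union>c\<in>C. ?ball c) \<le> n * ?V" .
  have "real (n * ?V) < real N * real ?V"
    using Suc.prems V1 by simp
  also have "\<dots> \<le> 2 ^ d" by (rule NV)
  finally have "n * ?V < 2 ^ d" by (simp flip: of_nat_mult) 
  then have "card (\<Union>c\<in>C. ?ball c) < card (B2 d)" using U card_B2 by simp
  moreover have finU: "finite (\<Union>c\<in>C. ?ball c)" using finB by (auto intro: finite_subset)
  ultimately have "\<not> B2 d \<subseteq> (\<Union>c\<in>C. ?ball c)"
    using card_mono[OF finU, of "B2 d"] by linarith
  then obtain x where x: "x \<in> B2 d" "x \<notin> (\<Union>c\<in>C. ?ball c)" by blast
  have xC: "x \<notin> C"
  proof
    assume "x \<in> C"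
    then have "x \<in> ?ball x" using x ed by (simp add: hamming_def)
    then show False using x \<open>x \<in> C\<close> by blast
  qed
  have far: "\<forall>c\<in>C. e * real d \<le> real (hamming d c x)" using x by auto
  show ?case
  proof (intro exI[of _ "insert x C"] conjI)
    show "insert x C \<subseteq> B2 d" using x C by auto
    show "card (insert x C) = Suc n" using xC finC C by simp
    show "\<forall>a\<in>insert x C. \<forall>b\<in>insert x C. a \<noteq> b \<longrightarrow> e * real d \<le> real (hamming d a b)"
    proof (intro ballI impI)
      fix a b assume a: "a \<in> insert x C" and b: "b \<in> insert x C" and ab: "a \<noteq> b"
      show "e * real d \<le> real (hamming d a b)"
      proof (cases "a = x")
        case True
        then have "b \<in> C" using b ab by auto
        then show ?thesis using far True hamming_sym[of d a b] by simp
      next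
        case False
        then have aC: "a \<in> C" using a by auto
        show ?thesis
        proof (cases "b = x")
          case True
          then show ?thesis using far aC by simp
        next
          case False
          then have "b \<in> C" using b by auto
          then show ?thesis using aC ab C(3) by blast
        qed
      qed
    qed
  qed
qed

lemma sep:
  assumes S: "S \<subseteq> B2 d" and a: "a \<in> S"
  shows "\<exists>g\<in>I3 d. Tset d g \<inter> S = {a}"
proof -
  define g where "g = restrict (\<lambda>i. 3 - a i) {0..<d}"
  have aB: "a \<in> B2 d" using S a by auto
  have gI: "g \<in> I3 d"
  proof -
    have "\<And>i. i < d \<Longrightarrow> a i \<in> {1,2}" using aB unfolding B2_def by auto
    then have h: "\<And>i. i < d \<Longrightarrow> 3 - a i \<in> {1,2,3}" by fastforce
    show ?thesis unfolding g_def I3_def using h by auto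
  qed
  have ga: "\<And>i. i < d \<Longrightarrow> g i \<noteq> a i"
  proof -
    fix i assume "i < d"
    then have "a i \<in> {1,2}" using aB unfolding B2_def by auto
    then show "g i \<noteq> a i" using \<open>i < d\<close> unfolding g_def by auto
  qed
  have "{i \<in> {0..<d}. g i \<noteq> a i} = {0..<d}" using ga by auto
  then have "a \<in> Tset d g"
    unfolding Tset_def hamming_def using aB B2_I3 by auto
  moreover have "b = a" if b: "b \<in> S" "b \<in> Tset d g" for b
  proof -
    have bB: "b \<in> B2 d" using b S by auto
    have cardeq: "card {i \<in> {0..<d}. g i \<noteq> b i} = card {0..<d}"
      using b unfolding Tset_def hamming_def by simp
    have sub: "{i \<in> {0..<d}. g i \<noteq> b i} \<subseteq> {0..<d}" by (rule subsetI) simp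
    have eqs: "{i \<in> {0..<d}. g i \<noteq> b i} = {0..<d}"
      by (rule card_subset_eq[OF finite_atLeastLessThan sub cardeq])
    show ?thesis
    proof (rule ext)
      fix i show "b i = a i"
      proof (cases "i < d")
        case True
        have "i \<in> {i \<in> {0..<d}. g i \<noteq> b i}" by (subst eqs) (simp add: True)
        then have gb: "g i \<noteq> b i" by simp
        have gi: "g i = 3 - a i" using True by (simp add: g_def)
        have "a i \<in> {1,2}" "b i \<in> {1,2}" using aB bB True unfolding B2_def by auto
        then show ?thesis using gb gi by auto
      next
        case False
        have "a \<in> {0..<d} \<rightarrow>\<^sub>E {1,2}" "b \<in> {0..<d} \<rightarrow>\<^sub>E {1,2}" using aB bB unfolding B2_def by auto
        then show ?thesis using False PiE_arb by (metis atLeastLessThan_iff)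
      qed
    qed
  qed
  ultimately have "Tset d g \<inter> S = {a}" using a by blast
  then show ?thesis using gI by blast
qed

theorem proposition6:
  fixes \<epsilon> :: real and d N :: nat
  assumes "0 < \<epsilon>" and "\<epsilon> \<le> 1/2" and "d \<ge> 1"
    and "N \<ge> 1" and "real N \<le> 2 powr ((1 - binent \<epsilon>) * real d)"
  shows "\<exists>S. S \<subseteq> I3 d \<and> eps_sparse \<epsilon> d S \<and> card S = N"
proof -
  let ?V = "card {A. A \<subseteq> {0..<d} \<and> real (card A) < \<epsilon> * real d}"
  have ed: "0 < \<epsilon> * real d" using assms by simp
  have V: "real ?V \<le> 2 powr (binent \<epsilon> * real d)" by (rule vol_bound) (use assms in auto)
  have "real N * real ?V \<le> 2 powr ((1 - binent \<epsilon>) * real d) * 2 powr (binent \<epsilon> * real d)"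
    using assms(5) V by (intro mult_mono) auto
  also have "\<dots> = 2 powr ((1 - binent \<epsilon>) * real d + binent \<epsilon> * real d)" by (rule powr_add[symmetric])
  also have "\<dots> = 2 powr (real d)" by (simp add: algebra_simps)
  also have "\<dots> = 2 ^ d" by (simp add: powr_realpow)
  finally have NV: "real N * real ?V \<le> 2 ^ d" .
  obtain C where C: "C \<subseteq> B2 d" "card C = N"
    "\<forall>a\<in>C. \<forall>b\<in>C. a \<noteq> b \<longrightarrow> \<epsilon> * real d \<le> real (hamming d a b)"
    using greedy[OF ed NV, of N] by auto
  have "C \<subseteq> I3 d" using C(1) B2_I3 by blast
  moreover have s2: "\<forall>a\<in>C. \<exists>g\<in>I3 d. Tset d g \<inter> C = {a}"
    using sep[OF C(1)] by (intro ballI) 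
  moreover have "eps_sparse \<epsilon> d C"
    unfolding eps_sparse_def using \<open>C \<subseteq> I3 d\<close> C(3) s2 by (intro conjI) assumption+
  ultimately show ?thesis using C(2) by blast
qed

end
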